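(* Let $P$ be a finite $(3+1)$-free poset. For every $P$-tableau $T$ (of any partition shape), $\mathbf u_{\mathrm{colword}(T)}\equiv\mathbf u_{\mathrm{diagword}(T)}\pmod{I^P_{\mathrm{plac}}}$.
   Context: $a<_Pb$: strict order; $a\sim_Pb$: incomparable or equal. $\mathcal{U}_P=\mathbb{Z}\langle u_a:a\in P\rangle$, $\mathbf u_w=u_{w_1}\cdots u_{w_m}$. $I^P_{\mathrm{plac}}$ is generated by $u_bu_au_c-u_bu_cu_a$ ($a<_Pb$, $c\not<_Pb$, $a<_Pc$), $u_cu_au_b-u_au_cu_b$ ($b\not<_Pa$, $b<_Pc$, $a<_Pc$), $u_cu_au_b-u_bu_cu_a$ ($a\sim_Pb$, $b\sim_Pc$, $a<_Pc$). A $P$-tableau is a filling $T$ of a Young diagram (English notation) with $T(1,c)<_PT(2,c)<_P\cdots$ down each column and $T(r,c+1)\not<_PT(r,c)$ along each row. $\mathrm{colword}(T)$ reads each column bottom to top, columns left to right. $\mathrm{diagword}(T)$ reads each diagonal $\{(r,c):c-r=\text{const}\}$ in order of increasing $r$, concatenating diagonals in order of increasing $c-r$. *)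

theory Defs
  imports Main
begin

text \<open>The finite poset P is modelled as a finite type with a partial order;
  a <_P b is the strict order <, and a ~_P b means incomparable or equal.\<close>

definition sim :: "'a::order \<Rightarrow> 'a \<Rightarrow> bool" where
  "sim a b \<longleftrightarrow> \<not> a < b \<and> \<not> b < a"

definition three_plus_one_free :: "'a::order itself \<Rightarrow> bool" where
  "three_plus_one_free _ \<longleftrightarrow>
     \<not> (\<exists>a b c d :: 'a. a < b \<and> b < c \<and> sim a d \<and> sim b d \<and> sim c d)"

text \<open>Elements of the free associative ring Z<u_a : a in P> are represented by their
  coefficient functions on words (lists); u_w is the indicator of the word w.\<close>

definition mono :: "'a list \<Rightarrow> ('a list \<Rightarrow> int)" where
  "mono w = (\<lambda>x. if x = w then 1 else 0)"

definition fmul :: "('a list \<Rightarrow> int) \<Rightarrow> ('a list \<Rightarrow> int) \<Rightarrow> ('a list \<Rightarrow> int)" where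
  "fmul f g = (\<lambda>x. \<Sum>i\<le>length x. f (take i x) * g (drop i x))"

inductive_set plac_ideal :: "('a::order list \<Rightarrow> int) set" where
  gen1: "\<lbrakk>a < b; \<not> c < b; a < c\<rbrakk> \<Longrightarrow>
           (\<lambda>x. mono [b,a,c] x - mono [b,c,a] x) \<in> plac_ideal"
| gen2: "\<lbrakk>\<not> b < a; b < c; a < c\<rbrakk> \<Longrightarrow>
           (\<lambda>x. mono [c,a,b] x - mono [a,c,b] x) \<in> plac_ideal"
| gen3: "\<lbrakk>sim a b; sim b c; a < c\<rbrakk> \<Longrightarrow>
           (\<lambda>x. mono [c,a,b] x - mono [b,c,a] x) \<in> plac_ideal"
| zero: "(\<lambda>x. 0) \<in> plac_ideal"
| add: "\<lbrakk>f \<in> plac_ideal; g \<in> plac_ideal\<rbrakk> \<Longrightarrow> (\<lambda>x. f x + g x) \<in> plac_ideal"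
| neg: "f \<in> plac_ideal \<Longrightarrow> (\<lambda>x. - f x) \<in> plac_ideal"
| lmul: "f \<in> plac_ideal \<Longrightarrow> fmul (mono v) f \<in> plac_ideal"
| rmul: "f \<in> plac_ideal \<Longrightarrow> fmul f (mono v) \<in> plac_ideal"

definition plac_cong :: "'a::order list \<Rightarrow> 'a list \<Rightarrow> bool" where
  "plac_cong v w \<longleftrightarrow> (\<lambda>x. mono v x - mono w x) \<in> plac_ideal"

text \<open>Partitions as weakly decreasing lists of positive parts; rows and columns 1-based.\<close>
definition is_partition :: "nat list \<Rightarrow> bool" where
  "is_partition lam \<longleftrightarrow> sorted (rev lam) \<and> 0 \<notin> set lam"

definition in_shape :: "nat list \<Rightarrow> nat \<Rightarrow> nat \<Rightarrow> bool" where
  "in_shape lam r c \<longleftrightarrow> 1 \<le> r \<and> r \<le> length lam \<and> 1 \<le> c \<and> c \<le> lam ! (r - 1)"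

definition num_cols :: "nat list \<Rightarrow> nat" where
  "num_cols lam = (if lam = [] then 0 else hd lam)"

definition col_len :: "nat list \<Rightarrow> nat \<Rightarrow> nat" where
  "col_len lam c = card {r. in_shape lam r c}"

definition is_P_tableau :: "nat list \<Rightarrow> (nat \<Rightarrow> nat \<Rightarrow> 'a::order) \<Rightarrow> bool" where
  "is_P_tableau lam T \<longleftrightarrow> is_partition lam \<and>
     (\<forall>r c. in_shape lam r c \<and> in_shape lam (r+1) c \<longrightarrow> T r c < T (r+1) c) \<and>
     (\<forall>r c. in_shape lam r c \<and> in_shape lam r (c+1) \<longrightarrow> \<not> T r (c+1) < T r c)"

definition colword :: "nat list \<Rightarrow> (nat \<Rightarrow> nat \<Rightarrow> 'a) \<Rightarrow> 'a list" where
  "colword lam T = concat (map (\<lambda>c. map (\<lambda>r. T r c) (rev [1..<col_len lam c + 1]))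
                               [1..<num_cols lam + 1])"

text \<open>Diagonal word: diagonals c - r = d by increasing d, each read by increasing r.\<close>
definition diagword :: "nat list \<Rightarrow> (nat \<Rightarrow> nat \<Rightarrow> 'a) \<Rightarrow> 'a list" where
  "diagword lam T = concat (map (\<lambda>d.
      map (\<lambda>r. T r (nat (int r + d)))
          (filter (\<lambda>r. int r + d \<ge> 1 \<and> in_shape lam r (nat (int r + d))) [1..<length lam + 1]))
      [1 - int (length lam) .. int (num_cols lam) - 1])"

end

theory Submission
  imports Defs
begin

lemma pc_refl: "plac_cong v v"
  unfolding plac_cong_def using plac_ideal.zero by simp

lemma pc_sym: "plac_cong v w \<Longrightarrow> plac_cong w v"
  unfolding plac_cong_def
  by (drule plac_ideal.neg) simp

lemma pc_trans: "plac_cong u v \<Longrightarrow> plac_cong v w \<Longrightarrow> plac_cong u w"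
  unfolding plac_cong_def
  by (drule (1) plac_ideal.add) simp

lemma fmul_mono_left:
  "fmul (Defs.mono p) f x = (if length p \<le> length x \<and> take (length p) x = p then f (drop (length p) x) else 0)"
proof -
  have "fmul (Defs.mono p) f x = (\<Sum>i\<le>length x. (if i = length p then (if take (length p) x = p then f (drop (length p) x) else 0) else 0))"
    unfolding fmul_def
  proof (rule sum.cong)
    fix i assume "i \<in> {..length x}"
    show "Defs.mono p (take i x) * f (drop i x) =
        (if i = length p then (if take (length p) x = p then f (drop (length p) x) else 0) else 0)"
    proof (cases "i = length p")
      case True thus ?thesis by (simp add: Defs.mono_def)
    next
      case False
      have "take i x \<noteq> p" using False \<open>i \<in> {..length x}\<close> by auto
      thus ?thesis using False by (simp add: Defs.mono_def)
    qed
  qed simp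
  also have "\<dots> = (if length p \<le> length x \<and> take (length p) x = p then f (drop (length p) x) else 0)"
    by (simp add: sum.delta)
  finally show ?thesis .
qed

lemma fmul_mono_right:
  "fmul f (Defs.mono q) x = (if length q \<le> length x \<and> drop (length x - length q) x = q then f (take (length x - length q) x) else 0)"
proof -
  have "fmul f (Defs.mono q) x = (\<Sum>i\<le>length x. (if i = length x - length q then (if length q \<le> length x \<and> drop (length x - length q) x = q then f (take (length x - length q) x) else 0) else 0))"
    unfolding fmul_def
  proof (rule sum.cong)
    fix i assume i: "i \<in> {..length x}"
    show "f (take i x) * Defs.mono q (drop i x) =
        (if i = length x - length q then (if length q \<le> length x \<and> drop (length x - length q) x = q then f (take (length x - length q) x) else 0) else 0)"
    proof (cases "i = length x - length q")
      case True
      show ?thesis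
      proof (cases "length q \<le> length x")
        case True2: True
        thus ?thesis using True by (simp add: Defs.mono_def)
      next
        case False
        hence "drop i x \<noteq> q" using i by (auto dest: arg_cong[of _ _ length])
        thus ?thesis using False True by (simp add: Defs.mono_def)
      qed
    next
      case False
      have "drop i x \<noteq> q" using False i by auto
      thus ?thesis using False by (simp add: Defs.mono_def)
    qed
  qed simp
  also have "\<dots> = (if length q \<le> length x \<and> drop (length x - length q) x = q then f (take (length x - length q) x) else 0)"
    by (simp add: sum.delta)
  finally show ?thesis .
qed

lemma pc_left: "plac_cong v w \<Longrightarrow> plac_cong (p @ v) (p @ w)"
  unfolding plac_cong_def
proof -
  assume "(\<lambda>x. Defs.mono v x - Defs.mono w x) \<in> plac_ideal"
  from plac_ideal.lmul[OF this, of p]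
  have "fmul (Defs.mono p) (\<lambda>x. Defs.mono v x - Defs.mono w x) \<in> plac_ideal" .
  moreover have "fmul (Defs.mono p) (\<lambda>x. Defs.mono v x - Defs.mono w x) = (\<lambda>x. Defs.mono (p @ v) x - Defs.mono (p @ w) x)"
  proof
    fix x :: "'a list"
    show "fmul (Defs.mono p) (\<lambda>x. Defs.mono v x - Defs.mono w x) x = Defs.mono (p @ v) x - Defs.mono (p @ w) x"
    proof (cases "length p \<le> length x \<and> take (length p) x = p")
      case True
      then obtain u where x: "x = p @ u" by (metis append_take_drop_id)
      show ?thesis unfolding x fmul_mono_left fmul_mono_right by (simp add: Defs.mono_def)
    next
      case False
      have "x \<noteq> p @ v" "x \<noteq> p @ w" using False by auto
      thus ?thesis using False unfolding fmul_mono_left fmul_mono_right by (simp add: Defs.mono_def)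
    qed
  qed
  ultimately show "(\<lambda>x. Defs.mono (p @ v) x - Defs.mono (p @ w) x) \<in> plac_ideal" by simp
qed

lemma pc_right: "plac_cong v w \<Longrightarrow> plac_cong (v @ q) (w @ q)"
  unfolding plac_cong_def
proof -
  assume "(\<lambda>x. Defs.mono v x - Defs.mono w x) \<in> plac_ideal"
  from plac_ideal.rmul[OF this, of q]
  have "fmul (\<lambda>x. Defs.mono v x - Defs.mono w x) (Defs.mono q) \<in> plac_ideal" .
  moreover have "fmul (\<lambda>x. Defs.mono v x - Defs.mono w x) (Defs.mono q) = (\<lambda>x. Defs.mono (v @ q) x - Defs.mono (w @ q) x)"
  proof
    fix x :: "'a list"
    show "fmul (\<lambda>x. Defs.mono v x - Defs.mono w x) (Defs.mono q) x = Defs.mono (v @ q) x - Defs.mono (w @ q) x"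
    proof (cases "length q \<le> length x \<and> drop (length x - length q) x = q")
      case True
      then obtain u where x: "x = u @ q" by (metis append_take_drop_id)
      show ?thesis unfolding x fmul_mono_left fmul_mono_right by (simp add: Defs.mono_def)
    next
      case False
      have "x \<noteq> v @ q" "x \<noteq> w @ q" using False by auto
      thus ?thesis using False unfolding fmul_mono_left fmul_mono_right by (simp add: Defs.mono_def)
    qed
  qed
  ultimately show "(\<lambda>x. Defs.mono (v @ q) x - Defs.mono (w @ q) x) \<in> plac_ideal" by simp
qed

lemma pc_ctx: "plac_cong v w \<Longrightarrow> plac_cong (p @ v @ q) (p @ w @ q)"
  using pc_left pc_right by (metis append_assoc)

lemma pc_gen1: "a < b \<Longrightarrow> \<not> c < b \<Longrightarrow> a < (c::'a::order) \<Longrightarrow> plac_cong [b,a,c] [b,c,a]"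
  unfolding plac_cong_def by (rule plac_ideal.gen1)


lemma moveA:
  fixes L y :: "'a::order"
  assumes "sorted_wrt (\<lambda>a b. b < a) (L # xs)" "\<forall>x\<in>set xs. x < y" "\<not> y < L"
  shows "plac_cong (p @ L # xs @ [y]) (p @ L # y # xs)"
  using assms
proof (induction xs rule: rev_induct)
  case Nil
  then show ?case by (simp add: pc_refl)
next
  case (snoc x xs)
  define b where "b = last (L # xs)"
  have bL: "L # xs = butlast (L # xs) @ [b]" unfolding b_def by simp
  have bin: "b = L \<or> b \<in> set xs" unfolding b_def
    by (metis last.simps last_in_set list.distinct(1) set_ConsD)
  have xb: "x < b" using snoc.prems(1) bin by (auto simp: sorted_wrt_append)
  have yb: "\<not> y < b" using bin snoc.prems(2,3) by (auto dest: less_not_sym)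
  have xy: "x < y" using snoc.prems(2) by simp
  obtain pre where pre: "L # xs = pre @ [b]" using bL by blast
  have 1: "plac_cong (p @ L # (xs @ [x]) @ [y]) (p @ L # xs @ [y, x])"
  proof -
    have "plac_cong ((p @ pre) @ [b, x, y] @ []) ((p @ pre) @ [b, y, x] @ [])"
      by (rule pc_ctx) (rule pc_gen1[OF xb yb xy])
    moreover have "p @ L # (xs @ [x]) @ [y] = p @ (L # xs) @ [x, y]" by simp
    moreover have "p @ (L # xs) @ [x, y] = (p @ pre) @ [b, x, y] @ []" unfolding pre by simp
    moreover have "p @ L # xs @ [y, x] = p @ (L # xs) @ [y, x]" by simp
    moreover have "p @ (L # xs) @ [y, x] = (p @ pre) @ [b, y, x] @ []" unfolding pre by simp
    ultimately show ?thesis by metis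
  qed
  have 2: "plac_cong (p @ L # xs @ [y] @ [x]) (p @ L # y # xs @ [x])"
  proof -
    have "plac_cong (p @ L # xs @ [y]) (p @ L # y # xs)"
      using snoc.IH snoc.prems by (simp add: sorted_wrt_append)
    from pc_right[OF this, of "[x]"] show ?thesis by simp
  qed
  show ?case using pc_trans[OF 1] 2 by simp
qed

lemma moveB:
  fixes L :: "'a::order"
  assumes "sorted_wrt (\<lambda>a b. b < a) (L # xs)" "\<forall>x\<in>set xs. \<forall>y\<in>set ys. x < y"
    "sorted_wrt (\<lambda>a b. \<not> b < a) (L # ys)"
  shows "plac_cong (p @ L # xs @ ys) (p @ L # ys @ xs)"
  using assms
proof (induction ys arbitrary: p L)
  case Nil
  then show ?case by (simp add: pc_refl)
next
  case (Cons y ys)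
  have 1: "plac_cong (p @ L # xs @ y # ys) (p @ L # y # xs @ ys)"
  proof -
    have "plac_cong (p @ L # xs @ [y]) (p @ L # y # xs)"
      by (rule moveA) (use Cons.prems in auto)
    from pc_right[OF this, of ys] show ?thesis by simp
  qed
  have 2: "plac_cong ((p @ [L]) @ y # xs @ ys) ((p @ [L]) @ y # ys @ xs)"
    by (rule Cons.IH) (use Cons.prems in auto)
  show ?case using pc_trans[OF 1] 2 by simp
qed

lemma interleave:
  fixes ds :: "int list" and e D :: "int \<Rightarrow> 'a::order list"
  assumes "sorted_wrt (<) ds"
    and "sorted_wrt (\<lambda>a b. b < a) (concat (map e ds))"
    and "\<forall>d\<in>set ds. length (e d) \<le> 1"
    and "\<forall>d\<in>set ds. \<forall>d'\<in>set ds. d < d' \<longrightarrow> D d \<noteq> [] \<longrightarrow> e d' \<noteq> [] \<longrightarrow> e d \<noteq> []"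
    and "\<forall>d\<in>set ds. \<forall>d'\<in>set ds. d < d' \<longrightarrow> (\<forall>x\<in>set (e d'). \<forall>y\<in>set (D d). x < y)"
    and "\<forall>d\<in>set ds. sorted_wrt (\<lambda>a b. \<not> b < a) (e d @ D d)"
  shows "plac_cong (p @ concat (map e ds) @ concat (map D ds)) (p @ concat (map (\<lambda>d. e d @ D d) ds))"
  using assms
proof (induction ds arbitrary: p)
  case Nil
  then show ?case by (simp add: pc_refl)
next
  case (Cons d ds)
  define E' where "E' = concat (map e ds)"
  define D' where "D' = concat (map D ds)"
  have IH: "\<And>p. plac_cong (p @ E' @ D') (p @ concat (map (\<lambda>d. e d @ D d) ds))"
    unfolding E'_def D'_def
    by (rule Cons.IH) (use Cons.prems in \<open>auto simp: sorted_wrt_append\<close>)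
  show ?case
  proof (cases "D d = [] \<or> E' = []")
    case True
    then show ?thesis
    proof
      assume "D d = []"
      thus ?thesis using IH[of "p @ e d"] unfolding E'_def D'_def by simp
    next
      assume E: "E' = []"
      have c: "concat (map e ds) = []" using E unfolding E'_def .
      have eq: "concat (map e (d # ds)) = e d" using c by simp
      show ?thesis unfolding eq using IH[of "p @ e d @ D d"] unfolding E D'_def by simp
    qed
  next
    case False
    then obtain d' where d': "d' \<in> set ds" "e d' \<noteq> []" unfolding E'_def by auto
    have "d < d'" using Cons.prems(1) d'(1) by simp
    hence "e d \<noteq> []" using Cons.prems(4) d' False by auto
    with Cons.prems(3) obtain L where L: "e d = [L]"
      by (cases "e d") auto
    have 1: "plac_cong (p @ L # E' @ D d @ D') (p @ L # D d @ E' @ D')"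
    proof -
      have "plac_cong (p @ L # E' @ D d) (p @ L # D d @ E')"
      proof (rule moveB)
        show "sorted_wrt (\<lambda>a b. b < a) (L # E')"
          using Cons.prems(2) L unfolding E'_def by simp
        show "\<forall>x\<in>set E'. \<forall>y\<in>set (D d). x < y"
          using Cons.prems(1,5) unfolding E'_def by auto
        show "sorted_wrt (\<lambda>a b. \<not> b < a) (L # D d)"
          using Cons.prems(6) L by simp
      qed
      from pc_right[OF this, of D'] show ?thesis by simp
    qed
    have 2: "plac_cong ((p @ L # D d) @ E' @ D') ((p @ L # D d) @ concat (map (\<lambda>d. e d @ D d) ds))"
      by (rule IH)
    show ?thesis using pc_trans[OF 1] 2 L unfolding E'_def D'_def by simp
  qed
qed


lemma partition_antitone:
  assumes "is_partition lam" "i \<le> j" "j < length lam"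
  shows "lam ! j \<le> lam ! i"
  using assms sorted_rev_nth_mono unfolding is_partition_def by blast

lemma sh_up:
  assumes "is_partition lam" "in_shape lam r c" "1 \<le> r'" "r' \<le> r"
  shows "in_shape lam r' c"
proof -
  have "lam ! (r - 1) \<le> lam ! (r' - 1)"
    using assms partition_antitone[OF assms(1), of "r' - 1" "r - 1"] unfolding in_shape_def by auto
  thus ?thesis using assms unfolding in_shape_def by auto
qed

lemma sh_left:
  assumes "in_shape lam r c" "1 \<le> c'" "c' \<le> c"
  shows "in_shape lam r c'"
  using assms unfolding in_shape_def by auto

lemma sh_ncols:
  assumes "is_partition lam" "in_shape lam r c"
  shows "c \<le> num_cols lam"
proof -
  have "lam \<noteq> []" using assms(2) unfolding in_shape_def by auto
  hence "num_cols lam = lam ! 0" unfolding num_cols_def by (simp add: hd_conv_nth)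
  moreover have "lam ! (r - 1) \<le> lam ! 0"
    using assms partition_antitone[OF assms(1), of 0 "r - 1"] unfolding in_shape_def by auto
  ultimately show ?thesis using assms unfolding in_shape_def by auto
qed

lemma sh_first:
  assumes "1 \<le> c" "c \<le> num_cols lam"
  shows "in_shape lam 1 c"
proof -
  have "lam \<noteq> []" using assms unfolding num_cols_def by (auto split: if_splits)
  hence "1 \<le> length lam" by (cases lam) auto
  thus ?thesis using assms \<open>lam \<noteq> []\<close> unfolding in_shape_def num_cols_def by (simp add: hd_conv_nth)
qed

lemma col_len_char:
  assumes "is_partition lam"
  shows "in_shape lam r c \<longleftrightarrow> 1 \<le> r \<and> r \<le> col_len lam c"
proof -
  define S where "S = {r. in_shape lam r c}"
  have fin: "finite S" unfolding S_def in_shape_def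
    by (rule finite_subset[of _ "{..length lam}"]) auto
  have eq: "S = {1..card S}"
  proof (cases "S = {}")
    case True thus ?thesis by simp
  next
    case False
    define m where "m = Max S"
    have mS: "m \<in> S" unfolding m_def using fin False by simp
    have "S = {1..m}"
    proof
      show "S \<subseteq> {1..m}" unfolding m_def using fin by (auto simp: S_def in_shape_def)
      show "{1..m} \<subseteq> S" using mS sh_up[OF assms] unfolding S_def by auto
    qed
    thus ?thesis by simp
  qed
  have "in_shape lam r c \<longleftrightarrow> r \<in> S" unfolding S_def by simp
  also have "\<dots> \<longleftrightarrow> 1 \<le> r \<and> r \<le> card S" by (subst eq) simp
  finally show ?thesis unfolding col_len_def S_def .
qed

lemma col_chain:
  assumes "is_P_tableau lam T" "in_shape lam r c" "1 \<le> j" "j < r"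
  shows "T j c < T r c"
  using assms(2-4)
proof (induction r)
  case 0 thus ?case by simp
next
  case (Suc r)
  have p: "is_partition lam" using assms(1) unfolding is_P_tableau_def by simp
  have ir: "in_shape lam r c" using sh_up[OF p Suc.prems(1)] Suc.prems by auto
  have step: "T r c < T (Suc r) c"
    using assms(1) ir Suc.prems(1) unfolding is_P_tableau_def by (metis Suc_eq_plus1)
  show ?case
  proof (cases "j = r")
    case True thus ?thesis using step by simp
  next
    case False
    hence "T j c < T r c" using Suc.IH[OF ir Suc.prems(2)] Suc.prems(3) by simp
    thus ?thesis using step by simp
  qed
qed

lemma row_cond:
  assumes "is_P_tableau lam T" "in_shape lam r c" "2 \<le> c"
  shows "\<not> T r c < T r (c - 1)"
proof -
  have "in_shape lam r (c - 1)" using sh_left[OF assms(2)] assms(3) by simp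
  moreover have "c - 1 + 1 = c" using assms(3) by simp
  ultimately show ?thesis using assms(1,2) unfolding is_P_tableau_def by metis
qed

lemma KL_aux:
  fixes T :: "nat \<Rightarrow> nat \<Rightarrow> 'a::order"
  assumes tab: "is_P_tableau lam T" and free: "three_plus_one_free TYPE('a)"
  shows "\<And>r c'. c' = c + k \<Longrightarrow> in_shape lam r c' \<Longrightarrow> 1 \<le> j \<Longrightarrow> 1 \<le> c \<Longrightarrow> j + k < r \<Longrightarrow> T j c < T r c'"
proof (induction k)
  case 0
  thus ?case using col_chain[OF tab] by simp
next
  case (Suc k r c')
  have p: "is_partition lam" using tab unfolding is_P_tableau_def by simp
  have c2: "2 \<le> c'" using Suc.prems by simp
  have s1: "in_shape lam r (c' - 1)" using sh_left[OF Suc.prems(2)] c2 by simp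
  have s2: "in_shape lam (r - 1) (c' - 1)" using sh_up[OF p s1] Suc.prems by simp
  have ap: "T j c < T (r - 1) (c' - 1)"
    using Suc.IH[OF _ s2] Suc.prems by simp
  have pq: "T (r - 1) (c' - 1) < T r (c' - 1)"
  proof -
    have "r - 1 + 1 = r" using Suc.prems by simp
    thus ?thesis using tab s1 s2 unfolding is_P_tableau_def by metis
  qed
  have bq: "\<not> T r c' < T r (c' - 1)" using row_cond[OF tab Suc.prems(2) c2] .
  show ?case
  proof (rule ccontr)
    assume nab: "\<not> T j c < T r c'"
    have "sim (T j c) (T r c')" unfolding sim_def
      using nab bq ap pq by (meson less_trans)
    moreover have "sim (T (r - 1) (c' - 1)) (T r c')" unfolding sim_def
      using nab bq ap pq by (meson less_trans)
    moreover have "sim (T r (c' - 1)) (T r c')" unfolding sim_def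
      using nab bq ap pq by (meson less_trans)
    ultimately show False using free ap pq unfolding three_plus_one_free_def by blast
  qed
qed

lemma KL:
  fixes T :: "nat \<Rightarrow> nat \<Rightarrow> 'a::order"
  assumes tab: "is_P_tableau lam T" and free: "three_plus_one_free TYPE('a)"
    and "in_shape lam r c'" "1 \<le> j" "1 \<le> c" "c \<le> c'" "j + (c' - c) < r"
  shows "T j c < T r c'"
  using KL_aux[OF tab free, of c' c "c' - c" r j] assms by simp


definition colc :: "nat list \<Rightarrow> (nat \<Rightarrow> nat \<Rightarrow> 'a) \<Rightarrow> nat \<Rightarrow> 'a list" where
  "colc lam T c = map (\<lambda>r. T r c) (rev [1..<col_len lam c + 1])"

definition cw :: "nat list \<Rightarrow> (nat \<Rightarrow> nat \<Rightarrow> 'a) \<Rightarrow> nat \<Rightarrow> 'a list" where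
  "cw lam T c0 = concat (map (colc lam T) [c0..<num_cols lam + 1])"

definition dg :: "nat list \<Rightarrow> (nat \<Rightarrow> nat \<Rightarrow> 'a) \<Rightarrow> nat \<Rightarrow> int \<Rightarrow> 'a list" where
  "dg lam T c0 d = map (\<lambda>r. T r (nat (int r + d)))
      (filter (\<lambda>r. int r + d \<ge> int c0 \<and> in_shape lam r (nat (int r + d))) [1..<length lam + 1])"

definition dsl :: "nat list \<Rightarrow> int list" where
  "dsl lam = [1 - int (length lam) .. int (num_cols lam) - 1]"

definition dw :: "nat list \<Rightarrow> (nat \<Rightarrow> nat \<Rightarrow> 'a) \<Rightarrow> nat \<Rightarrow> 'a list" where
  "dw lam T c0 = concat (map (dg lam T c0) (dsl lam))"

definition ed :: "nat list \<Rightarrow> (nat \<Rightarrow> nat \<Rightarrow> 'a) \<Rightarrow> nat \<Rightarrow> int \<Rightarrow> 'a list" where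
  "ed lam T c0 d = (if 1 \<le> int c0 - d \<and> in_shape lam (nat (int c0 - d)) c0 then [T (nat (int c0 - d)) c0] else [])"

lemma colword_cw: "colword lam T = cw lam T 1"
  unfolding colword_def cw_def colc_def by simp

lemma diagword_dw: "diagword lam T = dw lam T 1"
  unfolding diagword_def dw_def dg_def dsl_def by simp

lemma cw_step: "1 \<le> c0 \<Longrightarrow> c0 \<le> num_cols lam \<Longrightarrow> cw lam T c0 = colc lam T c0 @ cw lam T (Suc c0)"
proof -
  assume "1 \<le> c0" "c0 \<le> num_cols lam"
  hence "[c0..<num_cols lam + 1] = c0 # [Suc c0..<num_cols lam + 1]" by (simp add: upt_conv_Cons)
  thus ?thesis unfolding cw_def by simp
qed

lemma cw_end: "cw lam T (Suc (num_cols lam)) = []"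
  unfolding cw_def by simp

lemma dw_end:
  assumes "is_partition lam"
  shows "dw lam T (Suc (num_cols lam)) = []"
proof -
  have "dg lam T (Suc (num_cols lam)) d = []" for d
  proof -
    have "\<not> (int r + d \<ge> int (Suc (num_cols lam)) \<and> in_shape lam r (nat (int r + d)))" for r
      using sh_ncols[OF assms, of r "nat (int r + d)"] by auto
    thus ?thesis unfolding dg_def by simp
  qed
  thus ?thesis unfolding dw_def by simp
qed

lemma dg_split: "dg lam T c0 d = ed lam T c0 d @ dg lam T (Suc c0) d"
proof -
  define N where "N = length lam + 1"
  define Q0 where "Q0 = (\<lambda>r. int r + d \<ge> int c0 \<and> in_shape lam r (nat (int r + d)))"
  define Q1 where "Q1 = (\<lambda>r. int r + d \<ge> int (Suc c0) \<and> in_shape lam r (nat (int r + d)))"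
  define f where "f = (\<lambda>r. T r (nat (int r + d)))"
  have dg0: "dg lam T c0 d = map f (filter Q0 [1..<N])" unfolding dg_def N_def Q0_def f_def ..
  have dg1: "dg lam T (Suc c0) d = map f (filter Q1 [1..<N])" unfolding dg_def N_def Q1_def f_def ..
  show ?thesis
  proof (cases "int c0 - d < 1")
    case True
    have "ed lam T c0 d = []" unfolding ed_def using True by simp
    moreover have "filter Q0 [1..<N] = filter Q1 [1..<N]"
      by (rule filter_cong) (use True in \<open>auto simp: Q0_def Q1_def\<close>)
    ultimately show ?thesis unfolding dg0 dg1 by simp
  next
    case False
    define r0 where "r0 = nat (int c0 - d)"
    have r0: "int r0 = int c0 - d" "1 \<le> r0" using False unfolding r0_def by auto
    show ?thesis
    proof (cases "r0 \<le> length lam")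
      case False2: False
      have "ed lam T c0 d = []" unfolding ed_def using False2 r0_def by (auto simp: in_shape_def)
      moreover have "filter Q0 [1..<N] = []" "filter Q1 [1..<N] = []"
        using False2 r0 by (auto simp: Q0_def Q1_def N_def filter_empty_conv)
      ultimately show ?thesis unfolding dg0 dg1 by simp
    next
      case True
      have split: "[1..<N] = [1..<r0] @ r0 # [Suc r0..<N]"
      proof -
        have "[1..<N] = [1..<r0] @ [r0..<r0 + (N - r0)]"
          using upt_add_eq_append[of 1 r0 "N - r0"] r0 True unfolding N_def by simp
        also have "[r0..<r0 + (N - r0)] = r0 # [Suc r0..<N]"
          using True unfolding N_def by (simp add: upt_conv_Cons)
        finally show ?thesis .
      qed
      have a: "filter Q0 [1..<r0] = []" "filter Q1 [1..<r0] = []"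
        using r0 by (auto simp: Q0_def Q1_def filter_empty_conv)
      have b: "filter Q0 [Suc r0..<N] = filter Q1 [Suc r0..<N]"
        by (rule filter_cong) (use r0 in \<open>auto simp: Q0_def Q1_def\<close>)
      have c: "Q0 r0 = in_shape lam r0 c0" "\<not> Q1 r0"
        using r0 by (auto simp: Q0_def Q1_def)
      have e: "ed lam T c0 d = (if in_shape lam r0 c0 then [f r0] else [])"
        unfolding ed_def f_def using r0 r0_def by auto
      show ?thesis unfolding dg0 dg1 split e using a b c by simp
    qed
  qed
qed

lemma concat_map_sing: "concat (map (\<lambda>x. [f x]) xs) = map f xs"
  by (induct xs) auto

lemma rev_upt_as_upto:
  "map (\<lambda>d. nat (int c0 - d)) [int c0 - int h .. int c0 - 1] = rev [1..<h+1]"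
proof (rule nth_equalityI)
  show "length (map (\<lambda>d. nat (int c0 - d)) [int c0 - int h .. int c0 - 1]) = length (rev [1..<h+1])"
    by simp
next
  fix i assume "i < length (map (\<lambda>d. nat (int c0 - d)) [int c0 - int h .. int c0 - 1])"
  hence i: "i < h" by simp
  have "[int c0 - int h .. int c0 - 1] ! i = int c0 - int h + int i"
    using i by (subst nth_upto) auto
  moreover have "rev [1..<h+1] ! i = h - i" using i by (simp add: rev_nth del: upt_Suc)
  ultimately show "map (\<lambda>d. nat (int c0 - d)) [int c0 - int h .. int c0 - 1] ! i = rev [1..<h+1] ! i"
    using i by simp
qed

lemma ed_col:
  assumes p: "is_partition lam" and c0: "1 \<le> c0" "c0 \<le> num_cols lam"
  shows "concat (map (ed lam T c0) (dsl lam)) = colc lam T c0"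
proof -
  define h where "h = col_len lam c0"
  have h1: "1 \<le> h" using sh_first[OF c0] col_len_char[OF p] unfolding h_def by auto
  have hl: "h \<le> length lam" using col_len_char[OF p, of h c0] h1 unfolding h_def in_shape_def by auto
  have edc: "ed lam T c0 d = (if 1 \<le> int c0 - d \<and> int c0 - d \<le> int h then [T (nat (int c0 - d)) c0] else [])" for d
    unfolding ed_def h_def using col_len_char[OF p, of "nat (int c0 - d)" c0] by auto
  define lo where "lo = 1 - int (length lam)"
  define hi where "hi = int (num_cols lam) - 1"
  have spl: "dsl lam = [lo .. int c0 - int h - 1] @ [int c0 - int h .. int c0 - 1] @ [int c0 .. hi]"
  proof -
    have "dsl lam = [lo .. int c0 - int h - 1] @ [int c0 - int h .. hi]"
      unfolding dsl_def lo_def hi_def using upto_split1[of "1 - int (length lam)" "int c0 - int h" "int (num_cols lam) - 1"]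
        h1 hl c0 by simp
    moreover have "[int c0 - int h .. hi] = [int c0 - int h .. int c0 - 1] @ [int c0 .. hi]"
      using upto_split2[of "int c0 - int h" "int c0 - 1" hi] h1 c0 unfolding hi_def by simp
    ultimately show ?thesis by simp
  qed
  have A: "concat (map (ed lam T c0) [lo .. int c0 - int h - 1]) = []"
    by (auto simp: edc)
  have B: "concat (map (ed lam T c0) [int c0 .. hi]) = []"
    by (auto simp: edc)
  have C: "concat (map (ed lam T c0) [int c0 - int h .. int c0 - 1]) = map (\<lambda>d. T (nat (int c0 - d)) c0) [int c0 - int h .. int c0 - 1]"
  proof -
    have eq: "map (ed lam T c0) [int c0 - int h .. int c0 - 1] = map (\<lambda>d. [T (nat (int c0 - d)) c0]) [int c0 - int h .. int c0 - 1]"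
      by (rule map_cong) (auto simp: edc)
    show ?thesis unfolding eq concat_map_sing ..
  qed
  have "map (\<lambda>d. T (nat (int c0 - d)) c0) [int c0 - int h .. int c0 - 1] = map (\<lambda>r. T r c0) (rev [1..<h+1])"
    using arg_cong[OF rev_upt_as_upto[of c0 h], of "map (\<lambda>r. T r c0)"] by (simp add: comp_def del: upt_Suc)
  thus ?thesis unfolding spl map_append concat_append A B C colc_def h_def[symmetric] by simp
qed


lemma sorted_wrt_filter_rel:
  "sorted_wrt (\<lambda>a b. Q a \<longrightarrow> Q b \<longrightarrow> R a b) xs \<Longrightarrow> sorted_wrt R (filter Q xs)"
  by (induction xs) auto

lemma sorted_colc:
  assumes tab: "is_P_tableau lam T"
  shows "sorted_wrt (\<lambda>a b. b < a) (colc lam T c0)"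
proof -
  have p: "is_partition lam" using tab unfolding is_P_tableau_def by simp
  have "sorted_wrt (\<lambda>x y. T x c0 < T y c0) [1..<col_len lam c0 + 1]"
  proof (rule sorted_wrt_mono_rel[OF _ sorted_wrt_upt])
    fix x y assume "x \<in> set [1..<col_len lam c0 + 1]" "y \<in> set [1..<col_len lam c0 + 1]" "x < y"
    moreover hence "in_shape lam y c0" using col_len_char[OF p] by auto
    ultimately show "T x c0 < T y c0" using col_chain[OF tab] by auto
  qed
  thus ?thesis unfolding colc_def by (simp add: sorted_wrt_map sorted_wrt_rev)
qed

lemma sorted_dg:
  fixes T :: "nat \<Rightarrow> nat \<Rightarrow> 'a::order"
  assumes tab: "is_P_tableau lam T" and free: "three_plus_one_free TYPE('a)" and c0: "1 \<le> c0"
  shows "sorted_wrt (\<lambda>a b. \<not> b < a) (dg lam T c0 d)"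
proof -
  define Q where "Q = (\<lambda>r. int r + d \<ge> int c0 \<and> in_shape lam r (nat (int r + d)))"
  have "sorted_wrt (\<lambda>a b. Q a \<longrightarrow> Q b \<longrightarrow> \<not> T b (nat (int b + d)) < T a (nat (int a + d))) [1..<length lam + 1]"
  proof (rule sorted_wrt_mono_rel[OF _ sorted_wrt_upt], intro impI)
    fix r r' assume r: "r \<in> set [1..<length lam + 1]" and "r' \<in> set [1..<length lam + 1]" and rr: "r < r'"
      and Qr: "Q r" and Qr': "Q r'"
    define c where "c = nat (int r + d)"
    define c' where "c' = nat (int r' + d)"
    have cc: "c' = c + (r' - r)" "1 \<le> c" using Qr rr c0 unfolding c_def c'_def Q_def by auto
    have s': "in_shape lam r' c'" using Qr' unfolding c'_def Q_def by simp
    have c2: "2 \<le> c'" using cc rr by simp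
    have s1: "in_shape lam r' (c' - 1)" using sh_left[OF s'] c2 by simp
    have "T r c < T r' (c' - 1)"
      by (rule KL[OF tab free s1]) (use r cc rr in auto)
    moreover have "\<not> T r' c' < T r' (c' - 1)" using row_cond[OF tab s' c2] .
    ultimately show "\<not> T r' (nat (int r' + d)) < T r (nat (int r + d))"
      unfolding c_def[symmetric] c'_def[symmetric] by (meson less_trans)
  qed
  hence "sorted_wrt (\<lambda>a b. \<not> T b (nat (int b + d)) < T a (nat (int a + d))) (filter Q [1..<length lam + 1])"
    by (rule sorted_wrt_filter_rel)
  thus ?thesis unfolding dg_def Q_def[symmetric] by (simp add: sorted_wrt_map)
qed

lemma step_main:
  fixes T :: "nat \<Rightarrow> nat \<Rightarrow> 'a::order"
  assumes tab: "is_P_tableau lam T" and free: "three_plus_one_free TYPE('a)"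
    and c0: "1 \<le> c0" "c0 \<le> num_cols lam"
  shows "plac_cong (colc lam T c0 @ dw lam T (Suc c0)) (dw lam T c0)"
proof -
  have p: "is_partition lam" using tab unfolding is_P_tableau_def by simp
  have "plac_cong ([] @ concat (map (ed lam T c0) (dsl lam)) @ concat (map (dg lam T (Suc c0)) (dsl lam)))
     ([] @ concat (map (\<lambda>d. ed lam T c0 d @ dg lam T (Suc c0) d) (dsl lam)))"
  proof (rule interleave)
    show "sorted_wrt (<) (dsl lam)" unfolding dsl_def by simp
    show "sorted_wrt (\<lambda>a b. b < a) (concat (map (ed lam T c0) (dsl lam)))"
      unfolding ed_col[OF p c0] by (rule sorted_colc[OF tab])
    show "\<forall>d\<in>set (dsl lam). length (ed lam T c0 d) \<le> 1" unfolding ed_def by simp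
    show "\<forall>d\<in>set (dsl lam). \<forall>d'\<in>set (dsl lam). d < d' \<longrightarrow> dg lam T (Suc c0) d \<noteq> [] \<longrightarrow> ed lam T c0 d' \<noteq> [] \<longrightarrow> ed lam T c0 d \<noteq> []"
    proof (intro ballI impI)
      fix d d' assume dd: "d < d'" and D: "dg lam T (Suc c0) d \<noteq> []" and E: "ed lam T c0 d' \<noteq> []"
      from D obtain r where r: "int r + d \<ge> int (Suc c0)" "in_shape lam r (nat (int r + d))"
        unfolding dg_def by (auto simp: filter_empty_conv)
      have d'1: "1 \<le> int c0 - d'" using E unfolding ed_def by (auto split: if_splits)
      have "in_shape lam (nat (int c0 - d)) (nat (int r + d))"
        by (rule sh_up[OF p r(2)]) (use d'1 dd r in auto)
      hence "in_shape lam (nat (int c0 - d)) c0"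
        by (rule sh_left) (use c0 r in auto)
      thus "ed lam T c0 d \<noteq> []" unfolding ed_def using d'1 dd by auto
    qed
    show "\<forall>d\<in>set (dsl lam). \<forall>d'\<in>set (dsl lam). d < d' \<longrightarrow> (\<forall>x\<in>set (ed lam T c0 d'). \<forall>y\<in>set (dg lam T (Suc c0) d). x < y)"
    proof (intro ballI impI)
      fix d d' x y assume dd: "d < d'" and x: "x \<in> set (ed lam T c0 d')" and y: "y \<in> set (dg lam T (Suc c0) d)"
      from y obtain r where r: "int r + d \<ge> int (Suc c0)" "in_shape lam r (nat (int r + d))"
        and yr: "y = T r (nat (int r + d))"
        unfolding dg_def by auto
      from x have d'1: "1 \<le> int c0 - d'" and xr: "x = T (nat (int c0 - d')) c0"
        unfolding ed_def by (auto split: if_splits)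
      show "x < y" unfolding xr yr
        by (rule KL[OF tab free r(2)]) (use d'1 dd r c0 in auto)
    qed
    show "\<forall>d\<in>set (dsl lam). sorted_wrt (\<lambda>a b. \<not> b < a) (ed lam T c0 d @ dg lam T (Suc c0) d)"
      using sorted_dg[OF tab free c0(1)] dg_split by metis
  qed
  moreover have "concat (map (\<lambda>d. ed lam T c0 d @ dg lam T (Suc c0) d) (dsl lam)) = dw lam T c0"
    unfolding dw_def using dg_split by metis
  ultimately show ?thesis unfolding ed_col[OF p c0] dw_def by simp
qed

lemma main_aux:
  fixes T :: "nat \<Rightarrow> nat \<Rightarrow> 'a::order"
  assumes tab: "is_P_tableau lam T" and free: "three_plus_one_free TYPE('a)"
  shows "1 \<le> c0 \<Longrightarrow> c0 \<le> num_cols lam + 1 \<Longrightarrow> plac_cong (cw lam T c0) (dw lam T c0)"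
proof (induction "num_cols lam + 1 - c0" arbitrary: c0)
  case 0
  have p: "is_partition lam" using tab unfolding is_P_tableau_def by simp
  have "c0 = Suc (num_cols lam)" using 0 by simp
  thus ?case using cw_end dw_end[OF p] pc_refl by metis
next
  case (Suc n)
  have c0: "1 \<le> c0" "c0 \<le> num_cols lam" using Suc by auto
  have "plac_cong (cw lam T (Suc c0)) (dw lam T (Suc c0))"
    by (rule Suc.hyps) (use Suc in auto)
  hence "plac_cong (colc lam T c0 @ cw lam T (Suc c0)) (colc lam T c0 @ dw lam T (Suc c0))"
    by (rule pc_left)
  hence "plac_cong (cw lam T c0) (colc lam T c0 @ dw lam T (Suc c0))"
    unfolding cw_step[OF c0] .
  thus ?case using pc_trans step_main[OF tab free c0] by blast
qed

theorem mainTheorem17: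
  fixes lam :: "nat list" and T :: "nat \<Rightarrow> nat \<Rightarrow> 'a::{order, finite}"
  assumes "three_plus_one_free TYPE('a)"
    and "is_P_tableau lam T"
  shows "plac_cong (colword lam T) (diagword lam T)"
  unfolding colword_cw diagword_dw
  by (rule main_aux[OF assms(2,1)]) auto

end
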